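(* Let $m=pq$ with $p,q$ distinct primes. For each $n\ge4$ and each $i$ with $1\le i\le n$ there exists an edge-labeling $\alpha$ of the complete graph $K_n$ by ideals of $\mathbb{Z}/m\mathbb{Z}$ such that $\operatorname{rk}[\mathbb{Z}/m\mathbb{Z}]_{(K_n,\alpha)}=i$.
   Context: An edge-labeling assigns to each edge of a graph a nonzero proper ideal of $\mathbb{Z}/m\mathbb{Z}$. A spline on an edge-labeled graph $(G,\alpha)$ with vertices $v_1,\dots,v_n$ is a vector $(f_{v_1},\dots,f_{v_n})\in(\mathbb{Z}/m\mathbb{Z})^n$ with $f_{v_i}-f_{v_j}\in\alpha(v_iv_j)$ for every edge; the splines form a $\mathbb{Z}$-module $[\mathbb{Z}/m\mathbb{Z}]_{(G,\alpha)}$, whose rank $\operatorname{rk}$ is the smallest size of a generating set. *)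

theory Defs
  imports "HOL-Number_Theory.Number_Theory" "HOL-Algebra.Ideal"
begin

text \<open>Z/mZ is modelled by residue_ring m (carrier {0..m-1}).
 Vertices of K_n are 0..n-1; an edge is the two-element set {i,j}.
 An edge-labeling assigns to each edge a nonzero proper ideal of Z/mZ.\<close>

definition edge_labeling :: "int \<Rightarrow> nat \<Rightarrow> (nat set \<Rightarrow> int set) \<Rightarrow> bool" where
  "edge_labeling m n \<alpha> \<longleftrightarrow>
     (\<forall>i<n. \<forall>j<n. i \<noteq> j \<longrightarrow>
        ideal (\<alpha> {i, j}) (residue_ring m) \<and> \<alpha> {i, j} \<noteq> {0} \<and>
        \<alpha> {i, j} \<noteq> carrier (residue_ring m))"

definition zm_vectors :: "int \<Rightarrow> nat \<Rightarrow> (nat \<Rightarrow> int) set" where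
  "zm_vectors m n = {f. (\<forall>k<n. f k \<in> {0..m-1}) \<and> (\<forall>k\<ge>n. f k = 0)}"

definition splines :: "int \<Rightarrow> nat \<Rightarrow> (nat set \<Rightarrow> int set) \<Rightarrow> (nat \<Rightarrow> int) set" where
  "splines m n \<alpha> = {f \<in> zm_vectors m n.
     \<forall>i<n. \<forall>j<n. i \<noteq> j \<longrightarrow> (f i - f j) mod m \<in> \<alpha> {i, j}}"

definition zm_span :: "int \<Rightarrow> nat \<Rightarrow> (nat \<Rightarrow> int) set \<Rightarrow> (nat \<Rightarrow> int) set" where
  "zm_span m n G = {(\<lambda>k. if k < n then (\<Sum>g\<in>G. c g * g k) mod m else 0) | c. True}"

definition spline_rank :: "int \<Rightarrow> nat \<Rightarrow> (nat set \<Rightarrow> int set) \<Rightarrow> nat" where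
  "spline_rank m n \<alpha> = (LEAST r. \<exists>G. finite G \<and> card G = r \<and> G \<subseteq> splines m n \<alpha> \<and>
        zm_span m n G = splines m n \<alpha>)"

end

theory Submission imports Defs begin

definition LI :: "int \<Rightarrow> int \<Rightarrow> int set" where
  "LI m d = {x. 0 \<le> x \<and> x < m \<and> d dvd x}"

lemma ideal_Idl:
  assumes m: "m > 1" and d: "d dvd m" "0 < d" "d < m"
  shows "ideal (LI m d) (residue_ring m)"
proof -
  interpret R: residues m "residue_ring m" by (unfold_locales) (rule m)
  have eq: "LI m d = PIdl\<^bsub>residue_ring m\<^esub> d"
  proof
    show "LI m d \<subseteq> PIdl\<^bsub>residue_ring m\<^esub> d"
    proof
      fix y assume y: "y \<in> LI m d"
      then obtain k where k: "y = d * k" unfolding LI_def by auto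
      have y0: "0 \<le> y" "y < m" using y unfolding LI_def by auto
      have k0: "k \<ge> 0" using y0 k d(2) by (simp add: zero_le_mult_iff)
      have "1 * k \<le> d * k" using d(2) k0 by (intro mult_right_mono) auto
      then have km: "k \<le> m - 1" using y0 k by simp
      have "y = (k * d) mod m" using y0 k by (simp add: mult.commute)
      then show "y \<in> PIdl\<^bsub>residue_ring m\<^esub> d" using k0 km
        unfolding cgenideal_def R.res_carrier_eq R.res_mult_eq by auto
    qed
  next
    show "PIdl\<^bsub>residue_ring m\<^esub> d \<subseteq> LI m d"
      unfolding cgenideal_def R.res_carrier_eq R.res_mult_eq LI_def
      using m d by (auto simp: dvd_mod_iff)
  qed
  have dc: "d \<in> carrier (residue_ring m)" using d by (simp add: R.res_carrier_eq)
  show ?thesis unfolding eq by (rule R.cgenideal_ideal[OF dc])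
qed

lemma edge_lab:
  assumes m: "m > 1" and lab: "\<And>e. lab e \<in> D"
    and D: "\<And>d. d \<in> D \<Longrightarrow> d dvd m \<and> 1 < d \<and> d < m"
  shows "edge_labeling m n (\<lambda>e. LI m (lab e))"
  unfolding edge_labeling_def
proof (intro allI impI conjI)
  fix a b
  have d: "lab {a,b} dvd m" "1 < lab {a,b}" "lab {a,b} < m" using D lab by auto
  show "ideal (LI m (lab {a, b})) (residue_ring m)"
    using ideal_Idl[OF m] d by auto
  have "lab {a,b} \<in> LI m (lab {a, b})" using d by (auto simp: LI_def)
  then show "LI m (lab {a, b}) \<noteq> {0}" using d by auto
  have "1 \<notin> LI m (lab {a, b})" using d by (auto simp: LI_def zdvd1_eq)
  moreover have "1 \<in> carrier (residue_ring m)" using m by (simp add: residue_ring_def)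
  ultimately show "LI m (lab {a, b}) \<noteq> carrier (residue_ring m)" by auto
qed

lemma splines_char:
  assumes m: "m > 1" and lab: "\<And>e. lab e dvd m"
  shows "splines m n (\<lambda>e. LI m (lab e)) =
    {f \<in> zm_vectors m n. \<forall>a<n. \<forall>b<n. a \<noteq> b \<longrightarrow> lab {a,b} dvd f a - f b}"
proof -
  have "(x mod m \<in> LI m (lab e)) = (lab e dvd x)" for x e
  proof -
    have m0: "m > 0" using m by simp
    have "(x mod m \<in> LI m (lab e)) = (lab e dvd x mod m)"
      unfolding LI_def using pos_mod_sign[OF m0, of x] pos_mod_bound[OF m0, of x] by simp
    also have "\<dots> = (lab e dvd x)" by (rule dvd_mod_iff[OF lab])
    finally show ?thesis .
  qed
  then show ?thesis by (simp only: splines_def)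
qed

lemma span_sub:
  assumes m: "m > 1" and lab: "\<And>e. lab e dvd m"
    and G: "G \<subseteq> splines m n (\<lambda>e. LI m (lab e))"
  shows "zm_span m n G \<subseteq> splines m n (\<lambda>e. LI m (lab e))"
proof
  fix f assume "f \<in> zm_span m n G"
  then obtain c where f: "f = (\<lambda>k. if k < n then (\<Sum>g\<in>G. c g * g k) mod m else 0)"
    unfolding zm_span_def by auto
  have m0: "m > 0" using m by simp
  have "f \<in> zm_vectors m n" unfolding f zm_vectors_def
    using pos_mod_sign[OF m0] pos_mod_bound[OF m0] by fastforce
  moreover have "lab {a,b} dvd f a - f b" if ab: "a < n" "b < n" "a \<noteq> b" for a b
  proof -
    have gd: "lab {a,b} dvd g a - g b" if "g \<in> G" for g
      using G that ab unfolding splines_char[OF m lab] by blast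
    have "(\<Sum>g\<in>G. c g * g a) - (\<Sum>g\<in>G. c g * g b) = (\<Sum>g\<in>G. c g * (g a - g b))"
      by (simp add: sum_subtractf right_diff_distrib)
    also have "lab {a,b} dvd \<dots>" using gd by (intro dvd_sum) auto
    finally have h: "lab {a,b} dvd (\<Sum>g\<in>G. c g * g a) - (\<Sum>g\<in>G. c g * g b)" .
    have "lab {a,b} dvd (\<Sum>g\<in>G. c g * g a) mod m - (\<Sum>g\<in>G. c g * g b) mod m"
    proof -
      let ?X = "(\<Sum>g\<in>G. c g * g a)" and ?Y = "(\<Sum>g\<in>G. c g * g b)"
      have "lab {a,b} dvd (?X - ?Y) mod m" using h dvd_mod_iff[OF lab[of "{a,b}"]] by blast
      then have "lab {a,b} dvd (?X mod m - ?Y mod m) mod m" by (simp only: mod_diff_eq)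
      then show ?thesis using dvd_mod_iff[OF lab[of "{a,b}"]] by blast
    qed
    then show ?thesis using ab unfolding f by simp
  qed
  ultimately show "f \<in> splines m n (\<lambda>e. LI m (lab e))"
    unfolding splines_char[OF m lab] by auto
qed

lemma vec_eq:
  assumes "f \<in> zm_vectors m n" "g \<in> zm_vectors m n" "k < n" "m dvd f k - g k"
  shows "f k = g k"
proof -
  have "f k mod m = g k mod m" using assms(4) by (simp add: mod_eq_dvd_iff)
  moreover have "f k mod m = f k" "g k mod m = g k" using assms unfolding zm_vectors_def by auto
  ultimately show ?thesis by simp
qed

lemma eq_range:
  fixes x y m :: int
  assumes "0 \<le> x" "x < m" "0 \<le> y" "y < m" "m dvd x - y"
  shows "x = y"
proof -
  have "x mod m = y mod m" using assms(5) by (simp add: mod_eq_dvd_iff)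
  then show ?thesis using assms by simp
qed

lemma zmv: "f \<in> zm_vectors m n \<Longrightarrow> k < n \<Longrightarrow> 0 \<le> f k \<and> f k < m"
  unfolding zm_vectors_def by auto

lemma case2:
  fixes P Q :: int and n i :: nat
  assumes pP: "prime P" and pQ: "prime Q" and PQ: "P \<noteq> Q" and i2: "2 \<le> i" and iN: "i \<le> n"
  defines "lab \<equiv> (\<lambda>e. if (\<forall>x\<in>e. i - 1 \<le> x) then P else Q)"
  shows "spline_rank (P*Q) n (\<lambda>e. LI (P*Q) (lab e)) = i"
proof -
  define m where "m = P * Q"
  have P1: "P > 1" and Q1: "Q > 1" using pP pQ prime_gt_1_int by auto
  have m1: "m > 1" unfolding m_def using P1 Q1
    using mult_strict_mono[of 1 P 1 Q] by simp
  have Pm: "P < m" unfolding m_def using P1 Q1 mult_strict_left_mono[of 1 Q P] by simp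
  have Qm: "Q < m" unfolding m_def using P1 Q1 mult_strict_right_mono[of 1 P Q] by simp
  have cop: "coprime P Q" using pP pQ PQ by (simp add: primes_coprime)
  have PQm: "P * Q dvd x" if "P dvd x" "Q dvd x" for x using divides_mult[OF that cop] .
  have labd: "lab e dvd m" for e unfolding lab_def m_def by auto
  define S where "S = splines m n (\<lambda>e. LI m (lab e))"
  have Sc: "S = {f \<in> zm_vectors m n. \<forall>a<n. \<forall>b<n. a \<noteq> b \<longrightarrow> lab {a,b} dvd f a - f b}"
    unfolding S_def by (rule splines_char[OF m1 labd])
  have labP: "lab {a,b} = P" if "i - 1 \<le> a" "i - 1 \<le> b" for a b using that by (auto simp: lab_def)
  have labQ: "lab {a,b} = Q" if "a < i - 1" for a b using that by (auto simp: lab_def)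
  have Sd: "lab {a,b} dvd f a - f b" if "f \<in> S" "a < n" "b < n" "a \<noteq> b" for f a b
    using that unfolding Sc by blast
  have Sz: "f \<in> zm_vectors m n" if "f \<in> S" for f
    using that unfolding Sc by blast
  have Sfix: "f k = f (i-1)" if f: "f \<in> S" and k: "i - 1 \<le> k" "k < n" for f k
  proof (cases "k = i - 1")
    case False
    have in1: "i - 1 < n" using i2 iN by auto
    have 1: "P dvd f k - f (i-1)" using Sd[OF f k(2) in1 False] labP[OF k(1), of "i-1"] by simp
    have 2: "Q dvd f 0 - f k" using Sd[OF f _ k(2), of 0] i2 labQ[of 0 k] False k by simp
    have 3: "Q dvd f 0 - f (i-1)" using Sd[OF f _ in1, of 0] i2 iN labQ[of 0 "i-1"] by simp
    have "Q dvd f k - f (i-1)" using dvd_diff[OF 3 2] by simp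
    with 1 have "m dvd f k - f (i-1)" unfolding m_def by (rule PQm)
    moreover have "0 \<le> f k \<and> f k < m" by (rule zmv[OF Sz[OF f] k(2)])
    moreover have "0 \<le> f (i-1) \<and> f (i-1) < m" by (rule zmv[OF Sz[OF f] in1])
    ultimately show ?thesis using eq_range[of "f k" m "f (i-1)"] by blast
  qed simp
  have SQ: "Q dvd f k - f (i-1)" if f: "f \<in> S" and k: "k < i - 1" for f k
    using Sd[OF f, of k "i-1"] k i2 iN labQ[of k "i-1"] by simp
  define one :: "nat \<Rightarrow> int" where "one = (\<lambda>k. if k < n then 1 else 0)"
  define E :: "nat \<Rightarrow> nat \<Rightarrow> int" where "E = (\<lambda>a k. if k = a then Q else 0)"
  define G where "G = insert one (E ` {0..<i-1})"
  have injE: "inj_on E {0..<i-1}"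
  proof
    fix a b assume "E a = E b"
    then have "E a a = E b a" by simp
    then show "a = b" using Q1 unfolding E_def by (auto split: if_splits)
  qed
  have oneE: "one \<notin> E ` {0..<i-1}"
  proof
    assume "one \<in> E ` {0..<i-1}"
    then obtain a where a: "a < i - 1" "one = E a" by auto
    then have "one (i-1) = E a (i-1)" by simp
    moreover have "i - 1 < n" using i2 iN by auto
    ultimately show False using a unfolding one_def E_def by simp
  qed
  have finG: "finite G" unfolding G_def by auto
  have cardG: "card G = i" unfolding G_def using oneE injE i2
    by (simp add: card_image)
  have oneS: "one \<in> S" unfolding Sc zm_vectors_def one_def using m1 by auto
  have ES: "E a \<in> S" if a: "a < i - 1" for a
  proof -
    have "E a \<in> zm_vectors m n" unfolding zm_vectors_def E_def using a i2 iN Q1 P1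
      using Qm by auto
    moreover have "lab {x,y} dvd E a x - E a y" if "x < n" "y < n" "x \<noteq> y" for x y
    proof (cases "\<forall>z\<in>{x,y}. i - 1 \<le> z")
      case True
      then show ?thesis using a unfolding E_def by auto
    next
      case False
      then show ?thesis unfolding lab_def E_def by auto
    qed
    ultimately show ?thesis unfolding Sc by auto
  qed
  have GS: "G \<subseteq> S" unfolding G_def using oneS ES by auto
  have spanG: "zm_span m n G = S"
  proof
    show "zm_span m n G \<subseteq> S" unfolding S_def by (rule span_sub[OF m1 labd GS[unfolded S_def]])
  next
    show "S \<subseteq> zm_span m n G"
    proof
      fix f assume f: "f \<in> S"
      define d where "d = (\<lambda>a. (f a - f (i-1)) div Q)"
      define c where "c = (\<lambda>g. if g = one then f (i-1) else d (inv_into {0..<i-1} E g))"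
      have "f = (\<lambda>k. if k < n then (\<Sum>g\<in>G. c g * g k) mod m else 0)"
      proof
        fix k
        have cE: "c (E a) = d a" if "a < i - 1" for a
          using that oneE injE unfolding c_def by (auto simp: inv_into_f_f)
        have "(\<Sum>g\<in>G. c g * g k) = c one * one k + (\<Sum>g\<in>E ` {0..<i-1}. c g * g k)"
          unfolding G_def using oneE by (simp add: sum.insert)
        also have "(\<Sum>g\<in>E ` {0..<i-1}. c g * g k) = (\<Sum>a\<in>{0..<i-1}. c (E a) * E a k)"
          using injE by (simp add: sum.reindex)
        also have "\<dots> = (\<Sum>a\<in>{0..<i-1}. if k = a then d a * Q else 0)"
          using cE unfolding E_def by (intro sum.cong) auto
        also have "\<dots> = (if k < i - 1 then d k * Q else 0)"
          by (simp add: sum.delta)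
        finally have sumeq: "(\<Sum>g\<in>G. c g * g k) = c one * one k + (if k < i - 1 then d k * Q else 0)" .
        show "f k = (if k < n then (\<Sum>g\<in>G. c g * g k) mod m else 0)"
        proof (cases "k < n")
          case False
          then show ?thesis using f unfolding Sc zm_vectors_def by auto
        next
          case True
          have fr: "f k mod m = f k" "f (i-1) mod m = f (i-1)"
            using f True i2 iN unfolding Sc zm_vectors_def by auto
          show ?thesis
          proof (cases "k < i - 1")
            case True
            have "d k * Q = f k - f (i-1)" unfolding d_def using SQ[OF f True] by simp
            then show ?thesis using sumeq True \<open>k < n\<close> fr unfolding c_def one_def by simp
          next
          case False
            then show ?thesis using sumeq \<open>k < n\<close> fr Sfix[OF f, of k] unfolding c_def one_def by simp
          qed
        qed
      qed
      then show "f \<in> zm_span m n G" unfolding zm_span_def by blast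
    qed
  qed
  have lower: "i \<le> card G'" if G': "finite G'" "G' \<subseteq> S" "zm_span m n G' = S" for G'
  proof -
    have P0: "P > 0" and m0: "m > 0" using P1 m1 by auto
    obtain u where u: "[Q * u = 1] (mod P)"
    proof -
      have "coprime Q P" using cop by (metis coprime_commute)
      then show ?thesis using cong_solve_coprime_int[of Q P] that by blast
    qed
    define \<pi> where "\<pi> = (\<lambda>f::nat\<Rightarrow>int. restrict (\<lambda>a. f a mod P) {0..<i})"
    define T where "T = PiE {0..<i} (\<lambda>_. {0..<P})"
    define F where "F = (\<lambda>h. restrict (\<lambda>a. (\<Sum>g\<in>G'. h g * g a) mod P) {0..<i})"
    have TS: "T \<subseteq> \<pi> ` S"
    proof
      fix t assume t: "t \<in> T"
      define f where "f = (\<lambda>a. if a < n then (Q * u * t (min a (i-1))) mod m else 0)"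
      have fS: "f \<in> S"
      proof -
        have "f \<in> zm_vectors m n" unfolding zm_vectors_def f_def
          using pos_mod_sign[OF m0] pos_mod_bound[OF m0] by fastforce
        moreover have "lab {a,b} dvd f a - f b" if "a < n" "b < n" "a \<noteq> b" for a b
        proof (cases "\<forall>z\<in>{a,b}. i - 1 \<le> z")
          case True
          then have "min a (i-1) = min b (i-1)" by auto
          then show ?thesis using that unfolding f_def by simp
        next
          case False
          have Qf: "Q dvd f x" for x
          proof (cases "x < n")
            case True
            have "Q dvd (Q * u * t (min x (i-1))) mod (P * Q)"
              using dvd_mod_iff[of Q "P * Q" "Q * u * t (min x (i-1))"] by simp
            then show ?thesis using True unfolding f_def m_def by simp
          qed (simp add: f_def)
          have "Q dvd f a - f b" by (intro dvd_diff Qf)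
          moreover have "lab {a,b} = Q" using False unfolding lab_def by auto
          ultimately show ?thesis by simp
        qed
        ultimately show ?thesis unfolding Sc by blast
      qed
      have "\<pi> f = t"
      proof
        fix a
        show "\<pi> f a = t a"
        proof (cases "a < i")
          case True
          have an: "a < n" using True iN by simp
          have "min a (i - 1) = a" using True by simp
          then have "\<pi> f a = (Q * u * t a) mod m mod P" using True an by (simp add: \<pi>_def f_def)
          also have "\<dots> = (Q * u * t a) mod P" unfolding m_def by (rule mod_mod_cancel) simp
          also have "\<dots> = ((Q * u) mod P * t a) mod P" by (rule mod_mult_left_eq[symmetric])
          also have "\<dots> = (1 mod P * t a) mod P"
            using u unfolding cong_def by (rule arg_cong[where f="\<lambda>z. (z * t a) mod P"])
          also have "\<dots> = (1 * t a) mod P" by (rule mod_mult_left_eq)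
          also have "\<dots> = t a"
          proof -
            have "t a \<in> {0..<P}" using PiE_mem[OF t[unfolded T_def]] True by simp
            then show ?thesis by simp
          qed
          finally show ?thesis .
        next
          case False
          then show ?thesis using PiE_arb[OF t[unfolded T_def]] by (simp add: \<pi>_def)
        qed
      qed
      then show "t \<in> \<pi> ` S" using fS by blast
    qed
    have SF: "\<pi> ` S \<subseteq> F ` PiE G' (\<lambda>_. {0..<P})"
    proof
      fix x assume "x \<in> \<pi> ` S"
      then obtain f where fS': "f \<in> S" and x: "x = \<pi> f" by blast
      have f: "f \<in> zm_span m n G'" using fS' G'(3) by simp
      then obtain c where fc: "f = (\<lambda>k. if k < n then (\<Sum>g\<in>G'. c g * g k) mod m else 0)"
        unfolding zm_span_def by auto
      define h where "h = restrict (\<lambda>g. c g mod P) G'"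
      have h: "h \<in> PiE G' (\<lambda>_. {0..<P})" unfolding h_def
        using pos_mod_sign[OF P0] pos_mod_bound[OF P0] by fastforce
      have "x = F h"
      proof
        fix a
        show "x a = F h a"
        proof (cases "a < i")
          case True
          have "x a = (\<Sum>g\<in>G'. c g * g a) mod m mod P" unfolding x \<pi>_def fc using True iN by auto
          also have "\<dots> = (\<Sum>g\<in>G'. c g * g a) mod P" unfolding m_def by (rule mod_mod_cancel) simp
          also have "\<dots> = (\<Sum>g\<in>G'. (c g * g a) mod P) mod P" by (simp add: mod_sum_eq)
          also have "\<dots> = (\<Sum>g\<in>G'. (h g * g a) mod P) mod P"
          proof -
            have "(c g * g a) mod P = (h g * g a) mod P" if "g \<in> G'" for g
              using that by (simp add: h_def mod_mult_left_eq)
            then have "(\<Sum>g\<in>G'. (c g * g a) mod P) = (\<Sum>g\<in>G'. (h g * g a) mod P)"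
              by (rule sum.cong[OF refl])
            then show ?thesis by simp
          qed
          also have "\<dots> = (\<Sum>g\<in>G'. h g * g a) mod P" by (simp add: mod_sum_eq)
          finally show ?thesis unfolding F_def using True by simp
        next
          case False
          then show ?thesis unfolding x \<pi>_def F_def by simp
        qed
      qed
      then show "x \<in> F ` PiE G' (\<lambda>_. {0..<P})" using h by blast
    qed
    have finPi: "finite (PiE G' (\<lambda>_. {0..<P}))" using G' by (intro finite_PiE) auto
    have cT: "nat P ^ i = card T" unfolding T_def by (simp add: card_PiE)
    have finF: "finite (F ` PiE G' (\<lambda>_. {0..<P}))" by (rule finite_imageI[OF finPi])
    have finS: "finite (\<pi> ` S)" by (rule finite_subset[OF SF finF])
    have "card T \<le> card (\<pi> ` S)" by (rule card_mono[OF finS TS])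
    also have "\<dots> \<le> card (F ` PiE G' (\<lambda>_. {0..<P}))" by (rule card_mono[OF finF SF])
    also have "\<dots> \<le> card (PiE G' (\<lambda>_. {0..<P}))" using finPi by (rule card_image_le)
    also have "\<dots> = nat P ^ card G'" using G' by (simp add: card_PiE)
    finally have "nat P ^ i \<le> nat P ^ card G'" using cT by simp
    moreover have "1 < nat P" using P1 by simp
    ultimately show ?thesis using power_le_imp_le_exp by blast
  qed
  have "spline_rank m n (\<lambda>e. LI m (lab e)) = i"
    unfolding spline_rank_def
  proof (rule Least_equality)
    show "\<exists>G. finite G \<and> card G = i \<and> G \<subseteq> splines m n (\<lambda>e. LI m (lab e)) \<and>
        zm_span m n G = splines m n (\<lambda>e. LI m (lab e))"
      using finG cardG GS spanG unfolding S_def by blast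
  next
    fix y assume "\<exists>G. finite G \<and> card G = y \<and> G \<subseteq> splines m n (\<lambda>e. LI m (lab e)) \<and>
        zm_span m n G = splines m n (\<lambda>e. LI m (lab e))"
    then show "i \<le> y" using lower unfolding S_def by blast
  qed
  then show ?thesis unfolding m_def .
qed

lemma case1:
  fixes P Q :: int and n :: nat
  assumes pP: "prime P" and pQ: "prime Q" and PQ: "P \<noteq> Q" and n4: "4 \<le> n"
  defines "lab \<equiv> (\<lambda>e::nat set. if e = {1,2} \<or> (0 \<in> e \<and> 1 \<notin> e) then P else Q)"
  shows "spline_rank (P*Q) n (\<lambda>e. LI (P*Q) (lab e)) = 1"
proof -
  define m where "m = P * Q"
  have P1: "P > 1" and Q1: "Q > 1" using pP pQ prime_gt_1_int by auto
  have m1: "m > 1" unfolding m_def using P1 Q1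
    using mult_strict_mono[of 1 P 1 Q] by simp
  have cop: "coprime P Q" using pP pQ PQ by (simp add: primes_coprime)
  have PQm: "P * Q dvd x" if "P dvd x" "Q dvd x" for x using divides_mult[OF that cop] .
  have labd: "lab e dvd m" for e unfolding lab_def m_def by auto
  define S where "S = splines m n (\<lambda>e. LI m (lab e))"
  have Sc: "S = {f \<in> zm_vectors m n. \<forall>a<n. \<forall>b<n. a \<noteq> b \<longrightarrow> lab {a,b} dvd f a - f b}"
    unfolding S_def by (rule splines_char[OF m1 labd])
  have Sd: "lab {a,b} dvd f a - f b" if "f \<in> S" "a < n" "b < n" "a \<noteq> b" for f a b
    using that unfolding Sc by blast
  have Sz: "f \<in> zm_vectors m n" if "f \<in> S" for f
    using that unfolding Sc by blast
  have L0: "lab {0,k} = P" if "k \<noteq> 1" for k using that unfolding lab_def by simp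
  have L12: "lab {1,2} = P" unfolding lab_def by simp
  have L01: "lab {0,1} = Q" unfolding lab_def by (auto simp: doubleton_eq_iff)
  have L1k: "lab {1,k} = Q" if "3 \<le> k" for k using that unfolding lab_def by (auto simp: doubleton_eq_iff)
  have L23: "lab {2,3} = Q" unfolding lab_def by (auto simp: doubleton_eq_iff)
  have n0: "0 < n" "1 < n" "2 < n" "3 < n" using n4 by auto
  have Sconst: "f k = f 0" if f: "f \<in> S" and k: "k < n" for f k
  proof -
    have p2: "P dvd f 0 - f 2" using Sd[OF f n0(1) n0(3)] L0[of 2] by simp
    have p12: "P dvd f 1 - f 2" using Sd[OF f n0(2) n0(3)] L12 by simp
    have q1: "Q dvd f 0 - f 1" using Sd[OF f n0(1) n0(2)] L01 by simp
    have q13: "Q dvd f 1 - f 3" using Sd[OF f n0(2) n0(4)] L1k[of 3] by simp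
    have q23: "Q dvd f 2 - f 3" using Sd[OF f n0(3) n0(4)] L23 by simp
    have Pk: "P dvd f 0 - f k"
    proof (cases "k = 0 \<or> k = 1")
      case True
      then show ?thesis
      proof
        assume "k = 1" then show ?thesis using dvd_diff[OF p2 p12] by simp
      qed simp
    next
      case False
      then show ?thesis using Sd[OF f n0(1) k] L0[of k] by simp
    qed
    have Qk: "Q dvd f 0 - f k"
    proof (cases "k \<ge> 3")
      case True
      then have k1: "1 \<noteq> k" by simp
      have q1k: "Q dvd f 1 - f k" using Sd[OF f n0(2) k k1] L1k[OF True] by simp
      show ?thesis using dvd_add[OF q1 q1k] by simp
    next
      case False
      then have "k = 0 \<or> k = 1 \<or> k = 2" by auto
      moreover have "Q dvd f 0 - f 2"
        using dvd_add[OF dvd_add[OF q1 q13] dvd_minus_iff[THEN iffD2, OF q23]] by simp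
      ultimately show ?thesis using q1 by auto
    qed
    have "m dvd f 0 - f k" unfolding m_def by (rule PQm[OF Pk Qk])
    moreover have "0 \<le> f k \<and> f k < m" by (rule zmv[OF Sz[OF f] k])
    moreover have "0 \<le> f 0 \<and> f 0 < m" by (rule zmv[OF Sz[OF f] n0(1)])
    ultimately show ?thesis using eq_range[of "f 0" m "f k"] by simp
  qed
  define one :: "nat \<Rightarrow> int" where "one = (\<lambda>k. if k < n then 1 else 0)"
  have oneS: "one \<in> S" unfolding Sc zm_vectors_def one_def using m1 by auto
  have spanG: "zm_span m n {one} = S"
  proof
    show "zm_span m n {one} \<subseteq> S" unfolding S_def
      by (rule span_sub[OF m1 labd]) (use oneS S_def in auto)
  next
    show "S \<subseteq> zm_span m n {one}"
    proof
      fix f assume f: "f \<in> S"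
      have feq: "f = (\<lambda>k. if k < n then (\<Sum>g\<in>{one}. (\<lambda>_. f 0) g * g k) mod m else 0)"
      proof
        fix k
        show "f k = (if k < n then (\<Sum>g\<in>{one}. (\<lambda>_. f 0) g * g k) mod m else 0)"
        proof (cases "k < n")
          case True
          have "f 0 mod m = f 0" using zmv[OF Sz[OF f] n0(1)] by simp
          then show ?thesis using True Sconst[OF f True] by (simp add: one_def)
        next
          case False
          then show ?thesis using Sz[OF f] unfolding zm_vectors_def by simp
        qed
      qed
      show "f \<in> zm_span m n {one}" unfolding zm_span_def mem_Collect_eq
        by (rule exI[where x="\<lambda>_. f 0"]) (use feq in simp)
    qed
  qed
  have "spline_rank m n (\<lambda>e. LI m (lab e)) = 1"
    unfolding spline_rank_def
  proof (rule Least_equality)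
    show "\<exists>G. finite G \<and> card G = 1 \<and> G \<subseteq> splines m n (\<lambda>e. LI m (lab e)) \<and>
        zm_span m n G = splines m n (\<lambda>e. LI m (lab e))"
      using oneS spanG unfolding S_def by (intro exI[of _ "{one}"]) auto
  next
    fix y assume "\<exists>G. finite G \<and> card G = y \<and> G \<subseteq> splines m n (\<lambda>e. LI m (lab e)) \<and>
        zm_span m n G = splines m n (\<lambda>e. LI m (lab e))"
    then obtain G where G: "finite G" "card G = y" "zm_span m n G = S" unfolding S_def by blast
    show "1 \<le> y"
    proof (rule ccontr)
      assume "\<not> 1 \<le> y"
      then have "card G = 0" using G by simp
      then have "G = {}" using G(1) by simp
      then have "one \<in> zm_span m n {}" using G oneS by simp
      then have "one 0 = 0" unfolding zm_span_def by auto
      then show False using n0 unfolding one_def by simp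
    qed
  qed
  then show ?thesis unfolding m_def .
qed

theorem mainTheorem13:
  fixes p q n i :: nat
  assumes "prime p" and "prime q" and "p \<noteq> q"
    and "n \<ge> 4" and "1 \<le> i" and "i \<le> n"
  shows "\<exists>\<alpha>. edge_labeling (int (p * q)) n \<alpha> \<and> spline_rank (int (p * q)) n \<alpha> = i"
proof -
  define P where "P = int p"
  define Q where "Q = int q"
  have pP: "prime P" and pQ: "prime Q" and PQ: "P \<noteq> Q" using assms unfolding P_def Q_def by auto
  have mPQ: "int (p * q) = P * Q" unfolding P_def Q_def by simp
  have P1: "P > 1" and Q1: "Q > 1" using pP pQ prime_gt_1_int by auto
  have m1: "P * Q > 1" using mult_strict_mono[of 1 P 1 Q] P1 Q1 by simp
  have Pm: "P < P * Q" using P1 Q1 mult_strict_left_mono[of 1 Q P] by simp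
  have Qm: "Q < P * Q" using P1 Q1 mult_strict_right_mono[of 1 P Q] by simp
  have D: "d dvd P * Q \<and> 1 < d \<and> d < P * Q" if "d \<in> {P, Q}" for d
    using that P1 Q1 Pm Qm by auto
  show ?thesis
  proof (cases "i = 1")
    case True
    define lab where "lab = (\<lambda>e::nat set. if e = {1,2} \<or> (0 \<in> e \<and> 1 \<notin> e) then P else Q)"
    have le: "lab e \<in> {P, Q}" for e unfolding lab_def by auto
    have "edge_labeling (P * Q) n (\<lambda>e. LI (P * Q) (lab e))"
      by (rule edge_lab[OF m1 le D])
    moreover have "spline_rank (P*Q) n (\<lambda>e. LI (P*Q) (lab e)) = 1"
      unfolding lab_def by (rule case1[OF pP pQ PQ assms(4)])
    ultimately show ?thesis unfolding mPQ using True by blast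
  next
    case False
    then have i2: "2 \<le> i" using assms by simp
    define lab where "lab = (\<lambda>e::nat set. if (\<forall>x\<in>e. i - 1 \<le> x) then P else Q)"
    have le: "lab e \<in> {P, Q}" for e unfolding lab_def by auto
    have "edge_labeling (P * Q) n (\<lambda>e. LI (P * Q) (lab e))"
      by (rule edge_lab[OF m1 le D])
    moreover have "spline_rank (P*Q) n (\<lambda>e. LI (P*Q) (lab e)) = i"
      unfolding lab_def by (rule case2[OF pP pQ PQ i2 assms(6)])
    ultimately show ?thesis unfolding mPQ by blast
  qed
qed

end
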